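(* Consider $N$ users, each $n$ equipped with the general single-user data below (with its own $K_n$, $P_n$, $\mathcal E$, $\zeta_n$, $\beta_n$, $\tau_n$, $D_n$), a probability vector $\boldsymbol\eta_n=(\eta_n^1,\dots,\eta_n^{K_n})$ (the stationary distribution of its channel) and an arrival rate $a_n\ge0$; let $B>0$. Writing $V_n^\lambda$, $V_n^{l,\lambda}$, $V_n^{u,\lambda}$ for the functions below at multiplier $\lambda$, define for $\lambda\ge0$ $$g_P(\lambda)=\lambda B+\sum_{n=1}^N a_n\sum_{i}\eta_n^iV_n^\lambda(0,\tau_n+D_n,i),$$ $$g_P^u(\lambda)=\lambda B+\sum_{n=1}^N a_n\min\{\beta_n,V_n^{u,\lambda}(\tau_n+D_n)\},\quad g_P^l(\lambda)=\lambda B+\sum_{n=1}^N a_n\max\{0,V_n^{l,\lambda}(\tau_n+D_n)\}.$$ Then $g_P^l(\lambda)\le g_P(\lambda)\le g_P^u(\lambda)$ for all $\lambda\ge0$, and $$\min_{\lambda\ge0}g_P^l(\lambda)\le\min_{\lambda\ge0}g_P(\lambda)\le\min_{\lambda\ge0}g_P^u(\lambda).$$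
   Context: General single-user data for user $n$: $\beta_n\ge0$, integers $\tau_n\ge1$, $D_n\ge0$; a Markov channel on $\{1,\dots,K_n\}$ with transition matrix $(P_n^{i,j})$; a finite set $\mathcal E\subset[0,\infty)$ containing $0$ and a positive element; $\zeta_n(i,\cdot):\mathcal E\to[0,1]$ with $\zeta_n(i,0)=0$, $\zeta_n(i,e)>0$ for $e>0$, strictly increasing; states totally ordered by $\zeta_n$ (for all $i,j$ either $\zeta_n(i,e)\ge\zeta_n(j,e)\ \forall e$ or $\le\ \forall e$), with $i_n^{\max}$, $i_n^{\min}$ states of maximal and minimal $\zeta_n(\cdot,e)$ for all $e$. Value function: $V_n(0,0,i)=0$, $V_n(0,\tau,i)=\max_{e\in\mathcal E}\{-\lambda e+\zeta_n(i,e)\beta_n+(1-\zeta_n(i,e))\sum_jP_n^{i,j}V_n(0,\tau-1,j)\}$ for $1\le\tau\le\tau_n+D_n$. Bounds: $V_n^l(0)=0$, $V_n^l(\tau)=\max_{e\in\mathcal E,e>0}\frac{1-[1-\zeta_n(i_n^{\min},e)]^{\tau}}{\zeta_n(i_n^{\min},e)}[-\lambda e+\zeta_n(i_n^{\min},e)\beta_n]$; $V_n^u(0)=0$, $V_n^u(\tau)=\sum_{z=1}^{\tau}\max_{e\in\mathcal E}\{-\lambda e+\zeta_n(i_n^{\max},e)(\beta_n-\max\{0,V_n^l(z-1)\})\}$. $g_P$ is the Lagrange dual function of the weighted timely-throughput problem with perfect prediction and $\min g_P$ the optimal weighted timely-throughput. *)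

theory Defs
  imports Complex_Main
begin

text \<open>Arguments: action set E, success probabilities zeta (state, energy), transition
  matrix P (states 1..K), number of states K, reward beta, multiplier lam,
  remaining time tau, channel state i.\<close>
primrec Vval :: "real set \<Rightarrow> (nat \<Rightarrow> real \<Rightarrow> real) \<Rightarrow> (nat \<Rightarrow> nat \<Rightarrow> real) \<Rightarrow> nat
    \<Rightarrow> real \<Rightarrow> real \<Rightarrow> nat \<Rightarrow> nat \<Rightarrow> real" where
  "Vval E zeta P K beta lam 0 i = 0"
| "Vval E zeta P K beta lam (Suc t) i =
     Max ((\<lambda>e. - lam * e + zeta i e * beta
              + (1 - zeta i e) * (\<Sum>j=1..K. P i j * Vval E zeta P K beta lam t j)) ` E)"

text \<open>Lower bound V^l(tau); zmin = zeta(i_min, .).\<close>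
definition Vlow :: "real set \<Rightarrow> (real \<Rightarrow> real) \<Rightarrow> real \<Rightarrow> real \<Rightarrow> nat \<Rightarrow> real" where
  "Vlow E zmin beta lam tau =
     (if tau = 0 then 0
      else Max ((\<lambda>e. (1 - (1 - zmin e) ^ tau) / zmin e * (- lam * e + zmin e * beta))
                 ` {e \<in> E. e > 0}))"

text \<open>Upper bound V^u(tau); zmax = zeta(i_max, .), zmin = zeta(i_min, .).\<close>
primrec Vup :: "real set \<Rightarrow> (real \<Rightarrow> real) \<Rightarrow> (real \<Rightarrow> real) \<Rightarrow> real \<Rightarrow> real \<Rightarrow> nat \<Rightarrow> real" where
  "Vup E zmax zmin beta lam 0 = 0"
| "Vup E zmax zmin beta lam (Suc t) = Vup E zmax zmin beta lam t
     + Max ((\<lambda>e. - lam * e + zmax e * (beta - max 0 (Vlow E zmin beta lam t))) ` E)"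

definition gP :: "nat \<Rightarrow> real \<Rightarrow> (nat \<Rightarrow> real) \<Rightarrow> (nat \<Rightarrow> nat \<Rightarrow> real) \<Rightarrow> real set
    \<Rightarrow> (nat \<Rightarrow> nat \<Rightarrow> real \<Rightarrow> real) \<Rightarrow> (nat \<Rightarrow> nat \<Rightarrow> nat \<Rightarrow> real) \<Rightarrow> (nat \<Rightarrow> nat)
    \<Rightarrow> (nat \<Rightarrow> real) \<Rightarrow> (nat \<Rightarrow> nat) \<Rightarrow> (nat \<Rightarrow> nat) \<Rightarrow> real \<Rightarrow> real" where
  "gP N B a eta E zeta P K beta tau D lam =
     lam * B + (\<Sum>n=1..N. a n * (\<Sum>i=1..K n. eta n i *
        Vval E (zeta n) (P n) (K n) (beta n) lam (tau n + D n) i))"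

definition gPu :: "nat \<Rightarrow> real \<Rightarrow> (nat \<Rightarrow> real) \<Rightarrow> real set
    \<Rightarrow> (nat \<Rightarrow> nat \<Rightarrow> real \<Rightarrow> real) \<Rightarrow> (nat \<Rightarrow> nat) \<Rightarrow> (nat \<Rightarrow> nat)
    \<Rightarrow> (nat \<Rightarrow> real) \<Rightarrow> (nat \<Rightarrow> nat) \<Rightarrow> (nat \<Rightarrow> nat) \<Rightarrow> real \<Rightarrow> real" where
  "gPu N B a E zeta imax imin beta tau D lam =
     lam * B + (\<Sum>n=1..N. a n * min (beta n)
        (Vup E (zeta n (imax n)) (zeta n (imin n)) (beta n) lam (tau n + D n)))"

definition gPl :: "nat \<Rightarrow> real \<Rightarrow> (nat \<Rightarrow> real) \<Rightarrow> real set
    \<Rightarrow> (nat \<Rightarrow> nat \<Rightarrow> real \<Rightarrow> real) \<Rightarrow> (nat \<Rightarrow> nat)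
    \<Rightarrow> (nat \<Rightarrow> real) \<Rightarrow> (nat \<Rightarrow> nat) \<Rightarrow> (nat \<Rightarrow> nat) \<Rightarrow> real \<Rightarrow> real" where
  "gPl N B a E zeta imin beta tau D lam =
     lam * B + (\<Sum>n=1..N. a n * max 0
        (Vlow E (zeta n (imin n)) (beta n) lam (tau n + D n)))"

end

theory Submission
  imports Defs
begin


lemma cont_Max:
  fixes f :: "'a::topological_space \<Rightarrow> 'c \<Rightarrow> real"
  assumes "finite A" "A \<noteq> {}" "\<And>e. e \<in> A \<Longrightarrow> continuous_on S (\<lambda>x. f x e)"
  shows "continuous_on S (\<lambda>x. Max ((\<lambda>e. f x e) ` A))"
  using assms
proof (induction A rule: finite_ne_induct)
  case (singleton e) then show ?case by simp
next
  case (insert e F)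
  have eq: "(\<lambda>x. Max ((\<lambda>e. f x e) ` insert e F)) = (\<lambda>x. max (f x e) (Max ((\<lambda>e. f x e) ` F)))"
    using insert by (simp add: Max_insert)
  have c2: "continuous_on S (\<lambda>x. Max ((\<lambda>e. f x e) ` F))"
    using insert.IH insert.prems by auto
  have c1: "continuous_on S (\<lambda>x. f x e)" using insert.prems by auto
  show ?case unfolding eq by (rule continuous_on_max[OF c1 c2])
qed

lemma exists_min:
  fixes g :: "real \<Rightarrow> real"
  assumes cont: "continuous_on UNIV g" and B: "B > 0" and lb: "\<forall>lam\<ge>0. g lam \<ge> lam * B"
  shows "\<exists>x\<ge>0. \<forall>lam\<ge>0. g x \<le> g lam"
proof -
  define M where "M = g 0 / B"
  have g0: "g 0 \<ge> 0" using lb by auto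
  have M: "M \<ge> 0" using g0 B by (simp add: M_def)
  have MB: "M * B = g 0" using B by (simp add: M_def)
  obtain x where x: "x \<in> {0..M}" "\<forall>y\<in>{0..M}. g x \<le> g y"
    using continuous_attains_inf[OF compact_Icc, of 0 M g] M continuous_on_subset[OF cont] by auto
  have "\<forall>lam\<ge>0. g x \<le> g lam"
  proof (intro allI impI)
    fix lam :: real assume l: "lam \<ge> 0"
    show "g x \<le> g lam"
    proof (cases "lam \<le> M")
      case True then show ?thesis using x l by auto
    next
      case False
      have "g x \<le> g 0" using x M by auto
      also have "\<dots> = M * B" using MB by simp
      also have "\<dots> \<le> lam * B" using False B by (intro mult_right_mono) auto
      also have "\<dots> \<le> g lam" using lb l by auto
      finally show ?thesis .
    qed
  qed
  then show ?thesis using x by auto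
qed

lemma cont_Vval: "continuous_on UNIV (\<lambda>lam. Vval E zeta P K beta lam t i)"
  if "finite E" "E \<noteq> {}"
proof (induction t arbitrary: i)
  case 0 then show ?case by simp
next
  case (Suc t)
  show ?case unfolding Vval.simps
    by (rule cont_Max[OF that]) (auto intro!: continuous_intros Suc)
qed

lemma cont_Vlow: "continuous_on UNIV (\<lambda>lam. Vlow E zmin beta lam t)"
  if "finite E" "\<exists>e\<in>E. e > 0"
proof (cases "t = 0")
  case True then show ?thesis by (simp add: Vlow_def)
next
  case False
  have ne: "{e \<in> E. e > 0} \<noteq> {}" using that by auto
  have eq: "(\<lambda>lam. Vlow E zmin beta lam t) = (\<lambda>lam. Max ((\<lambda>e. (1 - (1 - zmin e) ^ t) / zmin e * (- lam * e + zmin e * beta))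
                 ` {e \<in> E. e > 0}))" using False by (simp add: Vlow_def)
  show ?thesis unfolding eq
  proof (rule cont_Max)
    fix e
    show "continuous_on UNIV (\<lambda>lam. (1 - (1 - zmin e) ^ t) / zmin e * (- lam * e + zmin e * beta))"
      by (rule continuous_on_mult_left) (intro continuous_intros)
  qed (use that ne in auto)
qed

lemma cont_Vup: "continuous_on UNIV (\<lambda>lam. Vup E zmax zmin beta lam t)"
  if "finite E" "\<exists>e\<in>E. e > 0"
proof (induction t)
  case 0 then show ?case by simp
next
  case (Suc t)
  have ne: "E \<noteq> {}" using that by auto
  show ?case unfolding Vup.simps
    by (intro continuous_on_add Suc cont_Max[OF that(1) ne])
       (auto intro!: continuous_intros cont_Vlow that)
qed



context
  fixes E :: "real set" and zeta :: "nat \<Rightarrow> real \<Rightarrow> real" and P :: "nat \<Rightarrow> nat \<Rightarrow> real"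
    and K :: nat and beta lam :: real
  assumes fin: "finite E" and E0: "0 \<in> E" and Enn: "\<forall>e\<in>E. e \<ge> 0" and bnn: "beta \<ge> 0"
    and lnn: "lam \<ge> 0"
    and Pnn: "\<forall>i\<in>{1..K}. \<forall>j\<in>{1..K}. P i j \<ge> 0" and Psum: "\<forall>i\<in>{1..K}. (\<Sum>j=1..K. P i j) = 1"
    and zr: "\<forall>i\<in>{1..K}. \<forall>e\<in>E. 0 \<le> zeta i e \<and> zeta i e \<le> 1"
begin

lemma avg_ge:
  assumes "i \<in> {1..K}" "\<And>j. j \<in> {1..K} \<Longrightarrow> c \<le> x j"
  shows "c \<le> (\<Sum>j=1..K. P i j * x j)"
proof -
  have "c = (\<Sum>j=1..K. P i j) * c" using Psum assms(1) by simp
  also have "\<dots> = (\<Sum>j=1..K. P i j * c)" by (simp add: sum_distrib_right)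
  also have "\<dots> \<le> (\<Sum>j=1..K. P i j * x j)"
    using assms Pnn by (intro sum_mono mult_left_mono) auto
  finally show ?thesis .
qed

lemma avg_le:
  assumes "i \<in> {1..K}" "\<And>j. j \<in> {1..K} \<Longrightarrow> x j \<le> c"
  shows "(\<Sum>j=1..K. P i j * x j) \<le> c"
proof -
  have "c = (\<Sum>j=1..K. P i j) * c" using Psum assms(1) by simp
  also have "\<dots> = (\<Sum>j=1..K. P i j * c)" by (simp add: sum_distrib_right)
  finally have "c = (\<Sum>j=1..K. P i j * c)" .
  moreover have "(\<Sum>j=1..K. P i j * x j) \<le> (\<Sum>j=1..K. P i j * c)"
    using assms Pnn by (intro sum_mono mult_left_mono) auto
  ultimately show ?thesis by simp
qed

lemma V_bounds: "\<forall>i\<in>{1..K}. 0 \<le> Vval E zeta P K beta lam t i \<and> Vval E zeta P K beta lam t i \<le> beta"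
proof (induction t)
  case 0 then show ?case using bnn by simp
next
  case (Suc t)
  show ?case
  proof
    fix i assume i: "i \<in> {1..K}"
    define S where "S = (\<Sum>j=1..K. P i j * Vval E zeta P K beta lam t j)"
    have S0: "0 \<le> S" unfolding S_def using Suc i by (intro avg_ge) auto
    have Sb: "S \<le> beta" unfolding S_def using Suc i by (intro avg_le) auto
    let ?f = "\<lambda>e. - lam * e + zeta i e * beta + (1 - zeta i e) * S"
    have ne: "?f ` E \<noteq> {}" using E0 by auto
    have "\<forall>e\<in>E. ?f e \<le> beta"
    proof
      fix e assume e: "e \<in> E"
      have z: "0 \<le> zeta i e" "zeta i e \<le> 1" using zr i e by auto
      have "(1 - zeta i e) * S \<le> (1 - zeta i e) * beta" using z Sb by (intro mult_left_mono) auto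
      moreover have "lam * e \<ge> 0" using lnn Enn e by simp
      ultimately show "?f e \<le> beta" by (simp add: algebra_simps)
    qed
    hence le: "Max (?f ` E) \<le> beta" using fin ne by simp
    have z0: "0 \<le> zeta i 0" "zeta i 0 \<le> 1" using zr i E0 by auto
    have "0 \<le> ?f 0" using z0 S0 bnn by simp
    also have "\<dots> \<le> Max (?f ` E)" by (intro Max_ge finite_imageI fin imageI E0)
    finally show "0 \<le> Vval E zeta P K beta lam (Suc t) i \<and> Vval E zeta P K beta lam (Suc t) i \<le> beta"
      using le by (simp add: S_def)
  qed
qed

lemma V_ge_W:
  assumes e: "e \<in> E" and zpos: "0 < zmin e" and zmin: "\<forall>i\<in>{1..K}. zmin e \<le> zeta i e"
    and K1: "K \<ge> 1"
  shows "(1 - (1 - zmin e) ^ t) / zmin e * (- lam * e + zmin e * beta) \<le> beta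
    \<and> (\<forall>i\<in>{1..K}. (1 - (1 - zmin e) ^ t) / zmin e * (- lam * e + zmin e * beta) \<le> Vval E zeta P K beta lam t i)"
proof (induction t)
  case 0 then show ?case using bnn by simp
next
  case (Suc t)
  define z where "z = zmin e"
  define c where "c = - lam * e + z * beta"
  define W where "W = (1 - (1 - z) ^ t) / z * c"
  have z1: "z \<le> 1" using zmin zr K1 e unfolding z_def by (meson atLeastAtMost_iff order.trans order_refl)
  have zp: "0 < z" using zpos z_def by simp
  have IH: "W \<le> beta" "\<And>i. i \<in> {1..K} \<Longrightarrow> W \<le> Vval E zeta P K beta lam t i"
    using Suc unfolding W_def c_def z_def by auto
  have rec: "(1 - (1 - z) ^ Suc t) / z * c = c + (1 - z) * W"
    unfolding W_def using zp by (simp add: field_simps)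
  have le_b: "c + (1 - z) * W \<le> beta"
  proof -
    have "(1 - z) * W \<le> (1 - z) * beta" using z1 IH(1) by (intro mult_left_mono) auto
    moreover have "lam * e \<ge> 0" using lnn Enn e by simp
    ultimately show ?thesis unfolding c_def by (simp add: algebra_simps)
  qed
  have le_V: "c + (1 - z) * W \<le> Vval E zeta P K beta lam (Suc t) i" if i: "i \<in> {1..K}" for i
  proof -
    define S where "S = (\<Sum>j=1..K. P i j * Vval E zeta P K beta lam t j)"
    define \<zeta> where "\<zeta> = zeta i e"
    have WS: "W \<le> S" unfolding S_def using IH(2) i by (intro avg_ge) auto
    have zz: "z \<le> \<zeta>" "\<zeta> \<le> 1" using zmin zr i e unfolding z_def \<zeta>_def by auto
    have a1: "(1 - \<zeta>) * W \<le> (1 - \<zeta>) * S" using zz WS by (intro mult_left_mono) auto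
    have a2: "0 \<le> (\<zeta> - z) * (beta - W)" using zz IH(1) by simp
    have "c + (1 - z) * W \<le> - lam * e + \<zeta> * beta + (1 - \<zeta>) * S"
      using a1 a2 unfolding c_def by (simp add: algebra_simps)
    also have "\<dots> \<le> Vval E zeta P K beta lam (Suc t) i"
      using fin e by (simp add: S_def \<zeta>_def)
    finally show ?thesis .
  qed
  show ?case using rec le_b le_V unfolding z_def c_def by simp
qed

lemma Vlow_le_V:
  assumes E_pos: "\<exists>e\<in>E. e > 0" and zpos: "\<forall>e\<in>E. e > 0 \<longrightarrow> 0 < zmin e"
    and zmin: "\<forall>e\<in>E. \<forall>i\<in>{1..K}. zmin e \<le> zeta i e" and K1: "K \<ge> 1"
  shows "\<forall>i\<in>{1..K}. Vlow E zmin beta lam t \<le> Vval E zeta P K beta lam t i"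
proof (cases "t = 0")
  case True then show ?thesis by (simp add: Vlow_def)
next
  case False
  let ?f = "\<lambda>e. (1 - (1 - zmin e) ^ t) / zmin e * (- lam * e + zmin e * beta)"
  have ne: "?f ` {e \<in> E. e > 0} \<noteq> {}" using E_pos by auto
  have "Max (?f ` {e \<in> E. e > 0}) \<in> ?f ` {e \<in> E. e > 0}"
    using fin ne by (intro Max_in) auto
  then obtain e where e: "e \<in> E" "e > 0" and eq: "Vlow E zmin beta lam t = ?f e"
    using False by (auto simp: Vlow_def)
  show ?thesis using V_ge_W[OF e(1) _ _ K1, of zmin t] zpos zmin e eq by auto
qed

lemma sum_swap_stat:
  fixes x eta :: "nat \<Rightarrow> real"
  shows "(\<Sum>i=1..K. eta i * (\<Sum>j=1..K. P i j * x j)) = (\<Sum>j=1..K. (\<Sum>i=1..K. eta i * P i j) * x j)"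
  by (simp add: sum_distrib_left sum_distrib_right mult.assoc) (rule sum.swap)

lemma U_le_Vup:
  assumes E_pos: "\<exists>e\<in>E. e > 0" and zpos: "\<forall>e\<in>E. e > 0 \<longrightarrow> 0 < zmin e"
    and zmin: "\<forall>e\<in>E. \<forall>i\<in>{1..K}. zmin e \<le> zeta i e" and K1: "K \<ge> 1"
    and zmax: "\<forall>e\<in>E. \<forall>i\<in>{1..K}. zeta i e \<le> zmax e"
    and eta_nn: "\<forall>i\<in>{1..K}. eta i \<ge> 0" and eta_sum: "(\<Sum>i=1..K. eta i) = 1"
    and eta_stat: "\<forall>j\<in>{1..K}. (\<Sum>i=1..K. eta i * P i j) = eta j"
  shows "(\<Sum>i=1..K. eta i * Vval E zeta P K beta lam t i) \<le> Vup E zmax zmin beta lam t"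
proof (induction t)
  case 0 then show ?case by simp
next
  case (Suc t)
  define m where "m = max 0 (Vlow E zmin beta lam t)"
  define M where "M = Max ((\<lambda>e. - lam * e + zmax e * (beta - m)) ` E)"
  have Vb: "\<forall>i\<in>{1..K}. 0 \<le> Vval E zeta P K beta lam t i \<and> Vval E zeta P K beta lam t i \<le> beta"
    by (rule V_bounds)
  have Vl: "\<forall>i\<in>{1..K}. Vlow E zmin beta lam t \<le> Vval E zeta P K beta lam t i"
    by (rule Vlow_le_V[OF E_pos zpos zmin K1])
  have per: "Vval E zeta P K beta lam (Suc t) i \<le> (\<Sum>j=1..K. P i j * Vval E zeta P K beta lam t j) + M"
    if i: "i \<in> {1..K}" for i
  proof -
    define S where "S = (\<Sum>j=1..K. P i j * Vval E zeta P K beta lam t j)"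
    have S0: "0 \<le> S" unfolding S_def using Vb i by (intro avg_ge) auto
    have Sb: "S \<le> beta" unfolding S_def using Vb i by (intro avg_le) auto
    have Sl: "Vlow E zmin beta lam t \<le> S" unfolding S_def using Vl i by (intro avg_ge) auto
    have mS: "m \<le> S" using S0 Sl by (simp add: m_def)
    have "\<forall>e\<in>E. - lam * e + zeta i e * beta + (1 - zeta i e) * S \<le> S + M"
    proof
      fix e assume e: "e \<in> E"
      have z: "0 \<le> zeta i e" "zeta i e \<le> zmax e" using zr zmax i e by auto
      have "zeta i e * (beta - S) \<le> zeta i e * (beta - m)" using z mS by (intro mult_left_mono) auto
      also have "\<dots> \<le> zmax e * (beta - m)" using z mS Sb by (intro mult_right_mono) auto
      finally have a: "zeta i e * (beta - S) \<le> zmax e * (beta - m)" .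
      have "- lam * e + zmax e * (beta - m) \<le> M"
        unfolding M_def by (intro Max_ge finite_imageI fin imageI e)
      with a show "- lam * e + zeta i e * beta + (1 - zeta i e) * S \<le> S + M"
        by (simp add: algebra_simps)
    qed
    then have "Max ((\<lambda>e. - lam * e + zeta i e * beta + (1 - zeta i e) * S) ` E) \<le> S + M"
      using fin E0 by (intro Max.boundedI) auto
    then show ?thesis by (simp add: S_def)
  qed
  have "(\<Sum>i=1..K. eta i * Vval E zeta P K beta lam (Suc t) i)
      \<le> (\<Sum>i=1..K. eta i * ((\<Sum>j=1..K. P i j * Vval E zeta P K beta lam t j) + M))"
    using per eta_nn by (intro sum_mono mult_left_mono) auto
  also have "\<dots> = (\<Sum>i=1..K. eta i * (\<Sum>j=1..K. P i j * Vval E zeta P K beta lam t j)) + (\<Sum>i=1..K. eta i) * M"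
    by (simp add: distrib_left sum.distrib sum_distrib_right)
  also have "\<dots> = (\<Sum>j=1..K. (\<Sum>i=1..K. eta i * P i j) * Vval E zeta P K beta lam t j) + M"
    using eta_sum sum_swap_stat by simp
  also have "\<dots> = (\<Sum>j=1..K. eta j * Vval E zeta P K beta lam t j) + M"
    using eta_stat by simp
  also have "\<dots> \<le> Vup E zmax zmin beta lam t + M" using Suc by simp
  also have "\<dots> = Vup E zmax zmin beta lam (Suc t)" by (simp add: M_def m_def)
  finally show ?case .
qed

end

theorem corollary3:
  fixes N :: nat and B :: real and E :: "real set"
    and K :: "nat \<Rightarrow> nat" and P :: "nat \<Rightarrow> nat \<Rightarrow> nat \<Rightarrow> real"
    and zeta :: "nat \<Rightarrow> nat \<Rightarrow> real \<Rightarrow> real"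
    and beta :: "nat \<Rightarrow> real" and tau D :: "nat \<Rightarrow> nat"
    and eta :: "nat \<Rightarrow> nat \<Rightarrow> real" and a :: "nat \<Rightarrow> real"
    and imax imin :: "nat \<Rightarrow> nat"
  assumes B_pos: "B > 0"
    and E_fin: "finite E" and E_nonneg: "\<forall>e\<in>E. e \<ge> 0" and E_zero: "0 \<in> E"
    and E_pos: "\<exists>e\<in>E. e > 0"
    and beta_nonneg: "\<forall>n\<in>{1..N}. beta n \<ge> 0"
    and tau_pos: "\<forall>n\<in>{1..N}. tau n \<ge> 1"
    and K_pos: "\<forall>n\<in>{1..N}. K n \<ge> 1"
    and P_nonneg: "\<forall>n\<in>{1..N}. \<forall>i\<in>{1..K n}. \<forall>j\<in>{1..K n}. P n i j \<ge> 0"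
    and P_stoch: "\<forall>n\<in>{1..N}. \<forall>i\<in>{1..K n}. (\<Sum>j=1..K n. P n i j) = 1"
    and zeta_zero: "\<forall>n\<in>{1..N}. \<forall>i\<in>{1..K n}. zeta n i 0 = 0"
    and zeta_range: "\<forall>n\<in>{1..N}. \<forall>i\<in>{1..K n}. \<forall>e\<in>E. 0 \<le> zeta n i e \<and> zeta n i e \<le> 1"
    and zeta_pos: "\<forall>n\<in>{1..N}. \<forall>i\<in>{1..K n}. \<forall>e\<in>E. e > 0 \<longrightarrow> zeta n i e > 0"
    and zeta_mono: "\<forall>n\<in>{1..N}. \<forall>i\<in>{1..K n}. \<forall>e\<in>E. \<forall>e'\<in>E. e < e' \<longrightarrow> zeta n i e < zeta n i e'"
    and zeta_total: "\<forall>n\<in>{1..N}. \<forall>i\<in>{1..K n}. \<forall>j\<in>{1..K n}.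
        (\<forall>e\<in>E. zeta n i e \<ge> zeta n j e) \<or> (\<forall>e\<in>E. zeta n i e \<le> zeta n j e)"
    and imax_in: "\<forall>n\<in>{1..N}. imax n \<in> {1..K n}"
    and imin_in: "\<forall>n\<in>{1..N}. imin n \<in> {1..K n}"
    and imax_max: "\<forall>n\<in>{1..N}. \<forall>i\<in>{1..K n}. \<forall>e\<in>E. zeta n i e \<le> zeta n (imax n) e"
    and imin_min: "\<forall>n\<in>{1..N}. \<forall>i\<in>{1..K n}. \<forall>e\<in>E. zeta n (imin n) e \<le> zeta n i e"
    and eta_nonneg: "\<forall>n\<in>{1..N}. \<forall>i\<in>{1..K n}. eta n i \<ge> 0"
    and eta_sum: "\<forall>n\<in>{1..N}. (\<Sum>i=1..K n. eta n i) = 1"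
    and eta_stat: "\<forall>n\<in>{1..N}. \<forall>j\<in>{1..K n}. (\<Sum>i=1..K n. eta n i * P n i j) = eta n j"
    and a_nonneg: "\<forall>n\<in>{1..N}. a n \<ge> 0"
  shows "(\<forall>lam\<ge>0. gPl N B a E zeta imin beta tau D lam \<le> gP N B a eta E zeta P K beta tau D lam
              \<and> gP N B a eta E zeta P K beta tau D lam \<le> gPu N B a E zeta imax imin beta tau D lam)
       \<and> (\<exists>ll\<ge>0. \<exists>lp\<ge>0. \<exists>lu\<ge>0.
            (\<forall>lam\<ge>0. gPl N B a E zeta imin beta tau D ll \<le> gPl N B a E zeta imin beta tau D lam)
          \<and> (\<forall>lam\<ge>0. gP N B a eta E zeta P K beta tau D lp \<le> gP N B a eta E zeta P K beta tau D lam)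
          \<and> (\<forall>lam\<ge>0. gPu N B a E zeta imax imin beta tau D lu \<le> gPu N B a E zeta imax imin beta tau D lam)
          \<and> gPl N B a E zeta imin beta tau D ll \<le> gP N B a eta E zeta P K beta tau D lp
          \<and> gP N B a eta E zeta P K beta tau D lp \<le> gPu N B a E zeta imax imin beta tau D lu)"
  proof -
  have Ene: "E \<noteq> {}" using E_zero by auto
  have user: "max 0 (Vlow E (zeta n (imin n)) (beta n) lam (tau n + D n))
      \<le> (\<Sum>i=1..K n. eta n i * Vval E (zeta n) (P n) (K n) (beta n) lam (tau n + D n) i)
    \<and> (\<Sum>i=1..K n. eta n i * Vval E (zeta n) (P n) (K n) (beta n) lam (tau n + D n) i)
      \<le> min (beta n) (Vup E (zeta n (imax n)) (zeta n (imin n)) (beta n) lam (tau n + D n))"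
    if n: "n \<in> {1..N}" and l: "lam \<ge> 0" for n lam
  proof -
    let ?T = "tau n + D n"
    let ?V = "\<lambda>i. Vval E (zeta n) (P n) (K n) (beta n) lam ?T i"
    have bn: "beta n \<ge> 0" using beta_nonneg n by auto
    have Pn: "\<forall>i\<in>{1..K n}. \<forall>j\<in>{1..K n}. P n i j \<ge> 0" using P_nonneg n by auto
    have Ps: "\<forall>i\<in>{1..K n}. (\<Sum>j=1..K n. P n i j) = 1" using P_stoch n by auto
    have zr: "\<forall>i\<in>{1..K n}. \<forall>e\<in>E. 0 \<le> zeta n i e \<and> zeta n i e \<le> 1" using zeta_range n by auto
    have K1: "K n \<ge> 1" using K_pos n by auto
    have zpos: "\<forall>e\<in>E. e > 0 \<longrightarrow> 0 < zeta n (imin n) e" using zeta_pos imin_in n by auto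
    have zmin: "\<forall>e\<in>E. \<forall>i\<in>{1..K n}. zeta n (imin n) e \<le> zeta n i e" using imin_min n by auto
    have zmax: "\<forall>e\<in>E. \<forall>i\<in>{1..K n}. zeta n i e \<le> zeta n (imax n) e" using imax_max n by auto
    have en: "\<forall>i\<in>{1..K n}. eta n i \<ge> 0" using eta_nonneg n by auto
    have es: "(\<Sum>i=1..K n. eta n i) = 1" using eta_sum n by auto
    have est: "\<forall>j\<in>{1..K n}. (\<Sum>i=1..K n. eta n i * P n i j) = eta n j" using eta_stat n by auto
    note ctx = E_fin E_zero E_nonneg bn l Pn Ps zr
    have Vb: "\<forall>i\<in>{1..K n}. 0 \<le> ?V i \<and> ?V i \<le> beta n"
      by (rule V_bounds[OF ctx])
    have Vl: "\<forall>i\<in>{1..K n}. Vlow E (zeta n (imin n)) (beta n) lam ?T \<le> ?V i"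
      by (rule Vlow_le_V[OF ctx E_pos zpos zmin K1])
    have Uu: "(\<Sum>i=1..K n. eta n i * ?V i) \<le> Vup E (zeta n (imax n)) (zeta n (imin n)) (beta n) lam ?T"
      by (rule U_le_Vup[OF ctx E_pos zpos zmin K1 zmax en es est])
    have wavg_ge: "c \<le> (\<Sum>i=1..K n. eta n i * ?V i)" if "\<forall>i\<in>{1..K n}. c \<le> ?V i" for c
    proof -
      have "c = (\<Sum>i=1..K n. eta n i) * c" using es by simp
      also have "\<dots> = (\<Sum>i=1..K n. eta n i * c)" by (simp add: sum_distrib_right)
      also have "\<dots> \<le> (\<Sum>i=1..K n. eta n i * ?V i)"
        using that en by (intro sum_mono mult_left_mono) auto
      finally show ?thesis .
    qed
    have wavg_le: "(\<Sum>i=1..K n. eta n i * ?V i) \<le> beta n"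
    proof -
      have "(\<Sum>i=1..K n. eta n i * ?V i) \<le> (\<Sum>i=1..K n. eta n i * beta n)"
        using Vb en by (intro sum_mono mult_left_mono) auto
      also have "\<dots> = (\<Sum>i=1..K n. eta n i) * beta n" by (simp add: sum_distrib_right)
      finally show ?thesis using es by simp
    qed
    have "0 \<le> (\<Sum>i=1..K n. eta n i * ?V i)" using Vb by (intro wavg_ge) auto
    moreover have "Vlow E (zeta n (imin n)) (beta n) lam ?T \<le> (\<Sum>i=1..K n. eta n i * ?V i)"
      using Vl by (intro wavg_ge) auto
    ultimately show ?thesis using wavg_le Uu by simp
  qed
  have part1: "\<forall>lam\<ge>0. gPl N B a E zeta imin beta tau D lam \<le> gP N B a eta E zeta P K beta tau D lam
              \<and> gP N B a eta E zeta P K beta tau D lam \<le> gPu N B a E zeta imax imin beta tau D lam"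
  proof (intro allI impI conjI)
    fix lam :: real assume l: "lam \<ge> 0"
    show "gPl N B a E zeta imin beta tau D lam \<le> gP N B a eta E zeta P K beta tau D lam"
      unfolding gPl_def gP_def using user[OF _ l] a_nonneg
      by (intro add_left_mono sum_mono mult_left_mono) auto
    show "gP N B a eta E zeta P K beta tau D lam \<le> gPu N B a E zeta imax imin beta tau D lam"
      unfolding gPu_def gP_def using user[OF _ l] a_nonneg
      by (intro add_left_mono sum_mono mult_left_mono) auto
  qed
  have lbl: "\<forall>lam\<ge>0. gPl N B a E zeta imin beta tau D lam \<ge> lam * B"
  proof (intro allI impI)
    fix lam :: real assume "lam \<ge> 0"
    have "0 \<le> (\<Sum>n=1..N. a n * max 0 (Vlow E (zeta n (imin n)) (beta n) lam (tau n + D n)))"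
      using a_nonneg by (intro sum_nonneg mult_nonneg_nonneg) auto
    then show "gPl N B a E zeta imin beta tau D lam \<ge> lam * B" unfolding gPl_def by simp
  qed
  have lbp: "\<forall>lam\<ge>0. gP N B a eta E zeta P K beta tau D lam \<ge> lam * B"
    using lbl part1 by force
  have lbu: "\<forall>lam\<ge>0. gPu N B a E zeta imax imin beta tau D lam \<ge> lam * B"
    using lbp part1 by force
  have cl: "continuous_on UNIV (gPl N B a E zeta imin beta tau D)"
    unfolding gPl_def[abs_def]
    by (intro continuous_intros cont_Vlow E_fin E_pos)
  have cp: "continuous_on UNIV (gP N B a eta E zeta P K beta tau D)"
    unfolding gP_def[abs_def]
    by (intro continuous_intros cont_Vval E_fin Ene)
  have cu: "continuous_on UNIV (gPu N B a E zeta imax imin beta tau D)"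
    unfolding gPu_def[abs_def]
    by (intro continuous_intros cont_Vup E_fin E_pos)
  obtain ll where ll: "ll \<ge> 0" "\<forall>lam\<ge>0. gPl N B a E zeta imin beta tau D ll \<le> gPl N B a E zeta imin beta tau D lam"
    using exists_min[OF cl B_pos lbl] by auto
  obtain lp where lp: "lp \<ge> 0" "\<forall>lam\<ge>0. gP N B a eta E zeta P K beta tau D lp \<le> gP N B a eta E zeta P K beta tau D lam"
    using exists_min[OF cp B_pos lbp] by auto
  obtain lu where lu: "lu \<ge> 0" "\<forall>lam\<ge>0. gPu N B a E zeta imax imin beta tau D lu \<le> gPu N B a E zeta imax imin beta tau D lam"
    using exists_min[OF cu B_pos lbu] by auto
  have "gPl N B a E zeta imin beta tau D ll \<le> gP N B a eta E zeta P K beta tau D lp"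
    using ll(2) lp(1) part1 by (meson order.trans)
  moreover have "gP N B a eta E zeta P K beta tau D lp \<le> gPu N B a E zeta imax imin beta tau D lu"
    using lp(2) lu(1) part1 by (meson order.trans)
  ultimately show ?thesis using part1 ll lp lu by blast
qed

end
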